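(* For any pairwise commuting qubit states $\rho,\sigma,\omega\in\mathcal{S}(\mathbb{C}^2)$, $$d^2_{\mathrm{symm},2}(\rho,\sigma)+d^2_{\mathrm{symm},2}(\sigma,\omega)\ge d^2_{\mathrm{symm},2}(\rho,\omega).$$
   Context: Qubit setting: $\mathcal{H}=\mathbb{C}^2$, $\mathcal{H}^*$ is identified with $\mathbb{C}^2$ via the dual basis, and $A^T$ is the usual matrix transpose; operators on $\mathcal{H}\otimes\mathcal{H}^*$ are $4\times4$ matrices in the basis $e_1\otimes e_1^*,e_1\otimes e_2^*,e_2\otimes e_1^*,e_2\otimes e_2^*$. Pauli matrices: $\sigma_1=\begin{pmatrix}0&1\\1&0\end{pmatrix}$, $\sigma_2=\begin{pmatrix}0&-i\\i&0\end{pmatrix}$, $\sigma_3=\begin{pmatrix}1&0\\0&-1\end{pmatrix}$. The set of couplings of states $\rho,\omega$ is $\mathcal{C}(\rho,\omega)=\{\Pi\in\mathcal{S}(\mathcal{H}\otimes\mathcal{H}^* ):\mathrm{tr}_{\mathcal{H}^*}[\Pi]=\omega,\ \mathrm{tr}_{\mathcal{H}}[\Pi]=\rho^T\}$. $C_{\mathrm{symm},2}=\sum_{k=1}^3(\sigma_k\otimes I^T-I\otimes\sigma_k^T)^2$, which equals the matrix $\begin{pmatrix}4&0&0&-4\\0&8&0&0\\0&0&8&0\\-4&0&0&4\end{pmatrix}$; $D^2_{\mathrm{symm},2}(\rho,\omega)=\min_{\Pi\in\mathcal{C}(\rho,\omega)}\mathrm{tr}[\Pi C_{\mathrm{symm},2}]$,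 and $d_{\mathrm{symm},2}(\rho,\omega)=\big(D^2_{\mathrm{symm},2}(\rho,\omega)-\tfrac12(D^2_{\mathrm{symm},2}(\rho,\rho)+D^2_{\mathrm{symm},2}(\omega,\omega))\big)^{1/2}$. Note the claim is the triangle inequality for the squared quantity $d^2_{\mathrm{symm},2}$. *)

theory Defs
  imports "HOL-Analysis.Analysis"
begin

text \<open>Operators on H (x) H* are matrices indexed by
  pairs (i,j) :: 2 \<times> 2, where (i,j) stands for the basis vector e_i (x) e_j^*.\<close>

type_synonym qmat = "complex^2^2"
type_synonym qqmat = "complex^(2\<times>2)^(2\<times>2)"

definition mtr :: "complex^'n^'n \<Rightarrow> complex" where
  "mtr A = (\<Sum>i\<in>UNIV. A$i$i)"

definition psd :: "complex^'n^'n \<Rightarrow> bool" where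
  "psd A \<longleftrightarrow> (\<forall>v::complex^'n. Im (\<Sum>i\<in>UNIV. cnj (v$i) * (A *v v)$i) = 0
                                   \<and> Re (\<Sum>i\<in>UNIV. cnj (v$i) * (A *v v)$i) \<ge> 0)"

definition is_state :: "complex^'n^'n \<Rightarrow> bool" where
  "is_state A \<longleftrightarrow> psd A \<and> mtr A = 1"

definition kron :: "qmat \<Rightarrow> qmat \<Rightarrow> qqmat" where
  "kron A B = (\<chi> p q. A$(fst p)$(fst q) * B$(snd p)$(snd q))"

definition sigma1 :: qmat where
  "sigma1 = (\<chi> i j. if i = j then 0 else 1)"
definition sigma2 :: qmat where
  "sigma2 = (\<chi> i j. if i = j then 0 else if i = 1 then - \<i> else \<i>)"
definition sigma3 :: qmat where
  "sigma3 = (\<chi> i j. if i = j then (if i = 1 then 1 else -1) else 0)"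

definition pauli :: "nat \<Rightarrow> qmat" where
  "pauli k = (if k = 1 then sigma1 else if k = 2 then sigma2 else sigma3)"

definition C_symm2 :: qqmat where
  "C_symm2 = (\<Sum>k\<in>{1..3::nat}.
      (kron (pauli k) (transpose (mat 1)) - kron (mat 1) (transpose (pauli k))) **
      (kron (pauli k) (transpose (mat 1)) - kron (mat 1) (transpose (pauli k))))"

definition ptr_Hstar :: "qqmat \<Rightarrow> qmat" where
  "ptr_Hstar P = (\<chi> i k. \<Sum>j\<in>UNIV. P$(i,j)$(k,j))"
definition ptr_H :: "qqmat \<Rightarrow> qmat" where
  "ptr_H P = (\<chi> j l. \<Sum>i\<in>UNIV. P$(i,j)$(i,l))"

definition couplings :: "qmat \<Rightarrow> qmat \<Rightarrow> qqmat set" where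
  "couplings \<rho> \<omega> = {P. is_state P \<and> ptr_Hstar P = \<omega> \<and> ptr_H P = transpose \<rho>}"

text \<open>D^2_symm,2 (rho, omega) = min over couplings of tr[Pi C]; the trace is real
  (Pi and C Hermitian), we take its real part. The minimum is attained (compact set),
  so Inf coincides with it.\<close>
definition D2_symm2 :: "qmat \<Rightarrow> qmat \<Rightarrow> real" where
  "D2_symm2 \<rho> \<omega> = Inf ((\<lambda>P. Re (mtr (P ** C_symm2))) ` couplings \<rho> \<omega>)"

definition d2_symm2 :: "qmat \<Rightarrow> qmat \<Rightarrow> real" where
  "d2_symm2 \<rho> \<omega> = D2_symm2 \<rho> \<omega> - (D2_symm2 \<rho> \<rho> + D2_symm2 \<omega> \<omega>) / 2"

end

theory Submission
  imports Defs
begin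


lemma sum_22: "sum f (UNIV::(2\<times>2) set) = f (1,1) + f (1,2) + f (2,1) + f (2,2)"
proof -
  have "sum f (UNIV::(2\<times>2) set) = (\<Sum>i\<in>UNIV. \<Sum>j\<in>UNIV. f (i,j))"
    by (simp add: sum.cartesian_product UNIV_Times_UNIV[symmetric] del: UNIV_Times_UNIV)
  then show ?thesis by (simp add: sum_2 add.assoc)
qed

lemma sum_pair: "sum f (UNIV::('a::finite\<times>'b::finite) set) = (\<Sum>i\<in>UNIV. \<Sum>j\<in>UNIV. f (i,j))"
  by (simp add: sum.cartesian_product UNIV_Times_UNIV[symmetric] del: UNIV_Times_UNIV)

lemma one_ne_two2[simp]: "(1::2) \<noteq> 2" "(2::2) \<noteq> 1"
  by (simp_all add: exhaust_2)

lemma C_explicit: "C_symm2 = (\<chi> p q. if p = q then (if fst p = snd p then 4 else 8)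
    else if fst p = snd p \<and> fst q = snd q then -4 else 0)"
  unfolding C_symm2_def
  by (simp add: vec_eq_iff numeral_3_eq_3 forall_2 pauli_def sigma1_def sigma2_def sigma3_def kron_def matrix_matrix_mult_def sum_22 mat_def transpose_def)

definition cinner :: "complex^'n \<Rightarrow> complex^'n \<Rightarrow> complex" where
  "cinner x y = (\<Sum>p\<in>UNIV. cnj (x$p) * y$p)"
definition qf :: "complex^'n^'n \<Rightarrow> complex^'n \<Rightarrow> complex" where
  "qf P w = cinner w (P *v w)"
definition tens :: "complex^2 \<Rightarrow> complex^2 \<Rightarrow> complex^(2\<times>2)" where
  "tens u v = (\<chi> p. u$(fst p) * cnj (v$(snd p)))"
definition ev :: "qmat \<Rightarrow> complex^2 \<Rightarrow> complex" where
  "ev X v = (\<Sum>l\<in>UNIV. \<Sum>j\<in>UNIV. cnj (v$l) * X$l$j * v$j)"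
definition complbasis :: "complex^2 \<Rightarrow> complex^2 \<Rightarrow> bool" where
  "complbasis u1 u2 \<longleftrightarrow> (\<forall>i k. u1$i * cnj (u1$k) + u2$i * cnj (u2$k) = (if i = k then 1 else 0))"

lemma psd_qf: "psd P \<longleftrightarrow> (\<forall>v. Im (qf P v) = 0 \<and> Re (qf P v) \<ge> 0)"
  by (simp add: psd_def qf_def cinner_def)

lemma qf_tens: "qf P (tens u v) = (\<Sum>i\<in>UNIV. \<Sum>j\<in>UNIV. \<Sum>k\<in>UNIV. \<Sum>l\<in>UNIV.
    cnj (u$i) * v$j * P$(i,j)$(k,l) * u$k * cnj (v$l))"
  unfolding qf_def cinner_def tens_def matrix_vector_mult_def
  by (simp add: sum_pair sum_distrib_left mult_ac)

lemma complete_cnj: "complbasis u1 u2 \<Longrightarrow> cnj (u1$i) * u1$k + cnj (u2$i) * u2$k = (if i = k then 1 else 0)"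
  unfolding complbasis_def by (metis (no_types) complex_cnj_add complex_cnj_mult complex_cnj_one complex_cnj_zero complex_cnj_cnj mult.commute)

lemma delta_sum: "(\<Sum>k\<in>UNIV. \<Sum>l\<in>UNIV. (if (i::2) = k then (1::complex) else 0) * g k l) = (\<Sum>l\<in>UNIV. g i l)"
  using exhaust_2[of i] by (auto simp: sum_2)
lemma delta_sum1: "(\<Sum>k\<in>UNIV. (if (i::2) = k then (1::complex) else 0) * g k) = g i"
  using exhaust_2[of i] by (auto simp: sum_2)

lemma marg_H:
  assumes "complbasis u1 u2"
  shows "qf P (tens u1 v) + qf P (tens u2 v) = ev (transpose (ptr_H P)) v"
proof -
  have "qf P (tens u1 v) + qf P (tens u2 v) = (\<Sum>i\<in>UNIV. \<Sum>j\<in>UNIV. \<Sum>k\<in>UNIV. \<Sum>l\<in>UNIV.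
    (cnj (u1$i) * u1$k + cnj (u2$i) * u2$k) * (v$j * P$(i,j)$(k,l) * cnj (v$l)))"
    unfolding qf_tens by (simp add: sum.distrib[symmetric] algebra_simps)
  also have "\<dots> = (\<Sum>i\<in>UNIV. \<Sum>j\<in>UNIV. \<Sum>l\<in>UNIV. v$j * P$(i,j)$(i,l) * cnj (v$l))"
    apply (simp only: complete_cnj[OF assms])
    apply (subst sum.swap[where A=UNIV]) 
    apply (rule sum.cong, simp)
    apply (subst sum.swap[where A=UNIV]) 
    apply (rule sum.cong, simp)
    apply (rule delta_sum)
    done
  also have "\<dots> = ev (transpose (ptr_H P)) v"
    unfolding ev_def ptr_H_def transpose_def
    by (simp add: sum_2 algebra_simps)
  finally show ?thesis .
qed

lemma marg_Hstar:
  assumes "complbasis u1 u2"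
  shows "qf P (tens v u1) + qf P (tens v u2) = ev (ptr_Hstar P) v"
proof -
  have "qf P (tens v u1) + qf P (tens v u2) = (\<Sum>i\<in>UNIV. \<Sum>j\<in>UNIV. \<Sum>k\<in>UNIV. \<Sum>l\<in>UNIV.
    (u1$j * cnj (u1$l) + u2$j * cnj (u2$l)) * (cnj (v$i) * P$(i,j)$(k,l) * v$k))"
    unfolding qf_tens by (simp add: sum.distrib[symmetric] algebra_simps)
  also have "\<dots> = ev (ptr_Hstar P) v"
    using assms unfolding complbasis_def ev_def ptr_Hstar_def
    by (simp add: sum_2 algebra_simps)
  finally show ?thesis .
qed

definition Phi0 :: "complex^(2\<times>2)" where
  "Phi0 = (\<chi> p. if fst p = snd p then 1 else 0)"

lemma Phi0_tens: "complbasis u1 u2 \<Longrightarrow> Phi0 = tens u1 u1 + tens u2 u2"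
  unfolding complbasis_def Phi0_def tens_def by (simp add: vec_eq_iff)

lemma mtr_C: "mtr (P ** C_symm2) = 8 * mtr P - 4 * qf P Phi0"
  unfolding C_explicit mtr_def qf_def cinner_def Phi0_def matrix_matrix_mult_def matrix_vector_mult_def
  by (simp add: sum_22 algebra_simps)

lemma qf_comb: "qf P (a *s x + b *s y) = cnj a * a * qf P x + cnj b * b * qf P y
   + cnj a * b * cinner x (P *v y) + cnj b * a * cinner y (P *v x)"
  unfolding qf_def cinner_def matrix_vector_mult_def
  by (simp add: sum.distrib sum_distrib_left algebra_simps)




lemma cs_real:
  fixes A D S :: real
  assumes A: "A \<ge> 0" and D: "D \<ge> 0" and H: "\<And>a b. 0 \<le> a^2 * A + b^2 * D + a * b * S"
  shows "A + D + S \<le> (sqrt A + sqrt D)^2"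
proof -
  have eq: "(sqrt A + sqrt D)^2 = A + D + 2 * (sqrt A * sqrt D)"
    using A D by (simp add: power2_sum)
  have "S \<le> 2 * (sqrt A * sqrt D)"
  proof (cases "A = 0 \<or> D = 0")
    case True
    show ?thesis
    proof (rule ccontr)
      assume neg: "\<not> ?thesis"
      then have Sp: "S > 0" using True by auto
      then have Sn: "S \<noteq> 0" by simp
      show False
      proof (cases "A = 0")
        case True
        have "0 \<le> (- (D + 1) / S)^2 * A + 1^2 * D + (- (D + 1) / S) * 1 * S" by (rule H)
        also have "\<dots> = -1" using True Sn by simp
        finally show False by simp
      next
        case False
        then have "D = 0" using \<open>A = 0 \<or> D = 0\<close> by auto
        have "0 \<le> 1^2 * A + (- (A + 1) / S)^2 * D + 1 * (- (A + 1) / S) * S" by (rule H)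
        also have "\<dots> = -1" using \<open>D = 0\<close> Sn by simp
        finally show False by simp
      qed
    qed
  next
    case False
    then have Ap: "A > 0" and Dp: "D > 0" using A D by auto
    let ?q = "sqrt A * sqrt D"
    have "0 \<le> (sqrt D)^2 * A + (- sqrt A)^2 * D + sqrt D * (- sqrt A) * S" by (rule H)
    also have "\<dots> = 2 * (A * D) - ?q * S" using A D by simp
    finally have 1: "?q * S \<le> 2 * (A * D)" by simp
    have qp: "?q > 0" using Ap Dp by simp
    have "A * D = ?q * ?q" using A D
      by (simp add: real_sqrt_mult[symmetric])
    with 1 have "?q * S \<le> ?q * (2 * ?q)" by simp
    then show ?thesis using qp by (simp add: mult_le_cancel_left_pos)
  qed
  then show ?thesis using eq by simp
qed


lemma psd_cs:
  assumes "psd P"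
  shows "Re (qf P (x + y)) \<le> (sqrt (Re (qf P x)) + sqrt (Re (qf P y)))^2"
proof -
  let ?S = "Re (cinner x (P *v y) + cinner y (P *v x))"
  have A: "Re (qf P x) \<ge> 0" and D: "Re (qf P y) \<ge> 0" using assms by (auto simp: psd_qf)
  have H: "0 \<le> a^2 * Re (qf P x) + b^2 * Re (qf P y) + a * b * ?S" for a b :: real
  proof -
    have "0 \<le> Re (qf P (complex_of_real a *s x + complex_of_real b *s y))" using assms by (auto simp: psd_qf)
    also have "\<dots> = a^2 * Re (qf P x) + b^2 * Re (qf P y) + a * b * ?S"
      unfolding qf_comb by (simp add: power2_eq_square algebra_simps)
    finally show ?thesis .
  qed
  have "Re (qf P (x + y)) = Re (qf P x) + Re (qf P y) + ?S"
    using qf_comb[of P 1 x 1 y] by simp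
  then show ?thesis using cs_real[OF A D H] by simp
qed

lemma lower:
  assumes cu: "complbasis u1 u2" and P: "P \<in> couplings \<rho> \<omega>"
  shows "Re (qf P Phi0) \<le> (sqrt (min (Re (ev \<rho> u1)) (Re (ev \<omega> u1))) + sqrt (min (Re (ev \<rho> u2)) (Re (ev \<omega> u2))))^2"
proof -
  have ps: "psd P" and om: "ptr_Hstar P = \<omega>" and rh: "transpose (ptr_H P) = \<rho>"
    using P by (auto simp: couplings_def is_state_def)
  have nn: "Re (qf P v) \<ge> 0" for v using ps by (simp add: psd_qf)
  have h1: "qf P (tens u1 u1) + qf P (tens u2 u1) = ev \<rho> u1" using marg_H[OF cu, of P u1] rh by simp
  have h2: "qf P (tens u1 u2) + qf P (tens u2 u2) = ev \<rho> u2" using marg_H[OF cu, of P u2] rh by simp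
  have h3: "qf P (tens u1 u1) + qf P (tens u1 u2) = ev \<omega> u1" using marg_Hstar[OF cu, of P u1] om by simp
  have h4: "qf P (tens u2 u1) + qf P (tens u2 u2) = ev \<omega> u2" using marg_Hstar[OF cu, of P u2] om by simp
  define A where "A = Re (qf P (tens u1 u1))"
  define D where "D = Re (qf P (tens u2 u2))"
  have "A \<le> Re (ev \<rho> u1)" using arg_cong[OF h1, of Re] nn[of "tens u2 u1"] unfolding A_def by simp
  moreover have "A \<le> Re (ev \<omega> u1)" using arg_cong[OF h3, of Re] nn[of "tens u1 u2"] unfolding A_def by simp
  ultimately have sA: "sqrt A \<le> sqrt (min (Re (ev \<rho> u1)) (Re (ev \<omega> u1)))" by simp
  have "D \<le> Re (ev \<rho> u2)" using arg_cong[OF h2, of Re] nn[of "tens u1 u2"] unfolding D_def by simp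
  moreover have "D \<le> Re (ev \<omega> u2)" using arg_cong[OF h4, of Re] nn[of "tens u2 u1"] unfolding D_def by simp
  ultimately have sD: "sqrt D \<le> sqrt (min (Re (ev \<rho> u2)) (Re (ev \<omega> u2)))" by simp
  have "Re (qf P Phi0) \<le> (sqrt A + sqrt D)^2"
    unfolding Phi0_tens[OF cu] A_def D_def by (rule psd_cs[OF ps])
  also have "\<dots> \<le> (sqrt (min (Re (ev \<rho> u1)) (Re (ev \<omega> u1))) + sqrt (min (Re (ev \<rho> u2)) (Re (ev \<omega> u2))))^2"
    by (rule power_mono[OF add_mono[OF sA sD]]) (simp add: A_def D_def nn)
  finally show ?thesis .
qed

definition outer :: "complex^'n \<Rightarrow> complex^'n \<Rightarrow> complex^'n^'n" where
  "outer a b = (\<chi> p q. a$p * cnj (b$q))"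
definition ip :: "complex^2 \<Rightarrow> complex^2 \<Rightarrow> complex" where
  "ip a c = (\<Sum>i\<in>UNIV. a$i * cnj (c$i))"
definition onb :: "complex^2 \<Rightarrow> complex^2 \<Rightarrow> bool" where
  "onb u1 u2 \<longleftrightarrow> ip u1 u1 = 1 \<and> ip u2 u2 = 1 \<and> ip u1 u2 = 0"
definition diag :: "qmat \<Rightarrow> real \<Rightarrow> real \<Rightarrow> complex^2 \<Rightarrow> complex^2 \<Rightarrow> bool" where
  "diag X a b u1 u2 \<longleftrightarrow> (\<forall>i k. X$i$k = of_real a * (u1$i * cnj (u1$k)) + of_real b * (u2$i * cnj (u2$k)))"

lemma ip_swap: "ip a b = cnj (ip b a)"
  unfolding ip_def by (simp add: sum_2 mult.commute)

lemma mtr_outer_tens: "mtr (outer (tens a b) (tens c d)) = ip a c * ip d b"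
  unfolding mtr_def outer_def tens_def ip_def by (simp add: sum_22 sum_2 algebra_simps)
lemma ptrHs_outer_tens: "ptr_Hstar (outer (tens a b) (tens c d)) = (\<chi> i k. a$i * cnj (c$k) * ip d b)"
  unfolding ptr_Hstar_def outer_def tens_def ip_def by (simp add: vec_eq_iff sum_2 algebra_simps)
lemma ptrH_outer_tens: "ptr_H (outer (tens a b) (tens c d)) = (\<chi> j l. cnj (b$j) * d$l * ip a c)"
  unfolding ptr_H_def outer_def tens_def ip_def by (simp add: vec_eq_iff sum_2 algebra_simps)
lemma qf_outer: "qf (outer x y) t = cinner t x * cinner y t"
  unfolding qf_def cinner_def outer_def matrix_vector_mult_def
  by (simp add: sum_distrib_left sum_distrib_right algebra_simps sum_product)
lemma cinner_Phi0_tens: "cinner Phi0 (tens a b) = ip a b"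
  unfolding cinner_def Phi0_def tens_def ip_def by (simp add: sum_22 sum_2)
lemma cinner_tens_Phi0: "cinner (tens a b) Phi0 = ip b a"
  unfolding cinner_def Phi0_def tens_def ip_def by (simp add: sum_22 sum_2 mult.commute)

lemma sc_comp2: "((c::real) *\<^sub>R (P::complex^'m^'n))$i$j = complex_of_real c * P$i$j"
  unfolding vector_scaleR_component by (simp add: scaleR_conv_of_real)
lemma sc_comp1: "((c::real) *\<^sub>R (P::complex^'n))$i = complex_of_real c * P$i"
  unfolding vector_scaleR_component by (simp add: scaleR_conv_of_real)

lemma mtr_add: "mtr (P + Q) = mtr P + mtr Q" unfolding mtr_def by (simp add: sum.distrib)
lemma mtr_scale: "mtr ((c::real) *\<^sub>R P) = c *\<^sub>R mtr P" unfolding mtr_def by (simp add: scaleR_sum_right)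
lemma ptrHs_add: "ptr_Hstar (P + Q) = ptr_Hstar P + ptr_Hstar Q" unfolding ptr_Hstar_def by (simp add: vec_eq_iff sum.distrib)
lemma ptrHs_scale: "ptr_Hstar ((c::real) *\<^sub>R P) = c *\<^sub>R ptr_Hstar P" unfolding ptr_Hstar_def by (simp add: vec_eq_iff scaleR_sum_right)
lemma ptrH_add: "ptr_H (P + Q) = ptr_H P + ptr_H Q" unfolding ptr_H_def by (simp add: vec_eq_iff sum.distrib)
lemma ptrH_scale: "ptr_H ((c::real) *\<^sub>R P) = c *\<^sub>R ptr_H P" unfolding ptr_H_def by (simp add: vec_eq_iff scaleR_sum_right)
lemma qf_add: "qf (P + Q) t = qf P t + qf Q t"
  unfolding qf_def cinner_def matrix_vector_mult_def by (simp add: sum.distrib algebra_simps)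
lemma qf_scale: "qf ((c::real) *\<^sub>R P) t = c *\<^sub>R qf P t"
  unfolding qf_def cinner_def matrix_vector_mult_def by (simp add: scaleR_sum_right[symmetric] mult_scaleR_right mult_scaleR_left)

lemma outer_comb: "outer (a *\<^sub>R x + b *\<^sub>R y) (a *\<^sub>R x + b *\<^sub>R y) =
   (a*a) *\<^sub>R outer x x + (a*b) *\<^sub>R outer x y + (a*b) *\<^sub>R outer y x + (b*b) *\<^sub>R outer y y"
  unfolding outer_def by (simp add: vec_eq_iff sc_comp1 sc_comp2 algebra_simps)

lemma ev_diag:
  assumes "onb u1 u2" "diag X a b u1 u2"
  shows "ev X u1 = of_real a" "ev X u2 = of_real b"
proof -
  have o: "ip u1 u1 = 1" "ip u2 u2 = 1" "ip u1 u2 = 0" "ip u2 u1 = 0"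
    using assms(1) unfolding onb_def by (auto simp: ip_swap[of u2 u1])
  have "ev X u1 = of_real a * (ip u1 u1 * cnj (ip u1 u1)) + of_real b * (ip u2 u1 * cnj (ip u2 u1))"
    using assms(2) unfolding ev_def diag_def ip_def by (simp add: sum_2 algebra_simps)
  then show "ev X u1 = of_real a" using o by simp
  have "ev X u2 = of_real a * (ip u1 u2 * cnj (ip u1 u2)) + of_real b * (ip u2 u2 * cnj (ip u2 u2))"
    using assms(2) unfolding ev_def diag_def ip_def by (simp add: sum_2 algebra_simps)
  then show "ev X u2 = of_real b" using o by simp
qed

lemma cinner_swap: "cinner v t = cnj (cinner t v)"
  unfolding cinner_def by (simp add: mult.commute)

lemma psd_outer_sum:
  assumes "b \<ge> 0" "e \<ge> 0"
  shows "psd (outer v v + b *\<^sub>R outer z z + e *\<^sub>R outer w w)"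
proof -
  have "qf (outer v v + b *\<^sub>R outer z z + e *\<^sub>R outer w w) t =
     of_real ((cmod (cinner t v))^2 + b * (cmod (cinner t z))^2 + e * (cmod (cinner t w))^2)" for t
    unfolding qf_add qf_scale qf_outer cinner_swap[of v t] cinner_swap[of z t] cinner_swap[of w t]
    by (simp only: complex_norm_square[symmetric] scaleR_conv_of_real of_real_mult[symmetric] of_real_add[symmetric])
  then show ?thesis using assms unfolding psd_qf by simp
qed

lemma chi0: "(\<chi> i k. (0::complex)) = (0::complex^'a^'b)" by (simp add: vec_eq_iff)

lemma upper:
  assumes o: "onb u1 u2" and dr: "diag \<rho> ar br u1 u2" and dw: "diag \<omega> aw bw u1 u2"
    and nn: "ar \<ge> 0" "br \<ge> 0" "aw \<ge> 0" "bw \<ge> 0" and s1: "ar + br = 1" "aw + bw = 1"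
  shows "\<exists>P\<in>couplings \<rho> \<omega>. Re (qf P Phi0) = (sqrt (min ar aw) + sqrt (min br bw))^2"
proof -
  have ipv[simp]: "ip u1 u1 = 1" "ip u2 u2 = 1" "ip u1 u2 = 0" "ip u2 u1 = 0"
    using o unfolding onb_def by (auto simp: ip_swap[of u2 u1])
  define \<alpha> where "\<alpha> = min ar aw"
  define \<delta> where "\<delta> = min br bw"
  define \<beta> where "\<beta> = aw - \<alpha>"
  define \<epsilon> where "\<epsilon> = ar - \<alpha>"
  have pos: "\<alpha> \<ge> 0" "\<delta> \<ge> 0" "\<beta> \<ge> 0" "\<epsilon> \<ge> 0"
    using nn unfolding \<alpha>_def \<delta>_def \<beta>_def \<epsilon>_def by auto
  have rel: "\<alpha> + \<beta> = aw" "\<delta> + \<epsilon> = bw" "\<alpha> + \<epsilon> = ar" "\<delta> + \<beta> = br"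
    using s1 unfolding \<alpha>_def \<delta>_def \<beta>_def \<epsilon>_def by auto
  define x where "x = tens u1 u1"
  define y where "y = tens u2 u2"
  define z where "z = tens u1 u2"
  define w where "w = tens u2 u1"
  define v where "v = sqrt \<alpha> *\<^sub>R x + sqrt \<delta> *\<^sub>R y"
  define P where "P = outer v v + \<beta> *\<^sub>R outer z z + \<epsilon> *\<^sub>R outer w w"
  define m where "m = sqrt \<alpha> * sqrt \<delta>"
  have Pexp: "P = \<alpha> *\<^sub>R outer x x + m *\<^sub>R outer x y + m *\<^sub>R outer y x + \<delta> *\<^sub>R outer y y
      + \<beta> *\<^sub>R outer z z + \<epsilon> *\<^sub>R outer w w"
    unfolding P_def v_def outer_comb m_def using pos by simp
  have ps: "psd P" unfolding P_def by (rule psd_outer_sum) (use pos in auto)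
  have tr: "mtr P = 1"
  proof -
    have "mtr P = \<alpha> *\<^sub>R 1 + \<delta> *\<^sub>R 1 + \<beta> *\<^sub>R 1 + \<epsilon> *\<^sub>R (1::complex)"
      unfolding Pexp by (simp only: mtr_add mtr_scale) (simp add: x_def y_def z_def w_def mtr_outer_tens)
    also have "\<dots> = of_real (\<alpha> + \<beta> + (\<delta> + \<epsilon>))" by (simp add: scaleR_conv_of_real)
    also have "\<alpha> + \<beta> + (\<delta> + \<epsilon>) = 1" using rel s1 by linarith
    then have "complex_of_real (\<alpha> + \<beta> + (\<delta> + \<epsilon>)) = 1" by simp
    finally show ?thesis .
  qed
  have hs: "ptr_Hstar P = \<omega>"
  proof -
    have "ptr_Hstar P = \<alpha> *\<^sub>R (\<chi> i k. u1$i * cnj (u1$k)) + \<delta> *\<^sub>R (\<chi> i k. u2$i * cnj (u2$k))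
       + \<beta> *\<^sub>R (\<chi> i k. u1$i * cnj (u1$k)) + \<epsilon> *\<^sub>R (\<chi> i k. u2$i * cnj (u2$k))"
      unfolding Pexp by (simp only: ptrHs_add ptrHs_scale) (simp add: x_def y_def z_def w_def ptrHs_outer_tens chi0)
    also have "\<dots> = \<omega>"
      using dw unfolding diag_def by (simp add: vec_eq_iff) (simp add: scaleR_conv_of_real rel(1)[symmetric] rel(2)[symmetric] algebra_simps)
    finally show ?thesis .
  qed
  have h: "ptr_H P = transpose \<rho>"
  proof -
    have "ptr_H P = \<alpha> *\<^sub>R (\<chi> j l. cnj (u1$j) * u1$l) + \<delta> *\<^sub>R (\<chi> j l. cnj (u2$j) * u2$l)
       + \<beta> *\<^sub>R (\<chi> j l. cnj (u2$j) * u2$l) + \<epsilon> *\<^sub>R (\<chi> j l. cnj (u1$j) * u1$l)"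
      unfolding Pexp by (simp only: ptrH_add ptrH_scale) (simp add: x_def y_def z_def w_def ptrH_outer_tens chi0)
    also have "\<dots> = transpose \<rho>"
      using dr unfolding diag_def transpose_def by (simp add: vec_eq_iff) (simp add: scaleR_conv_of_real rel(3)[symmetric] rel(4)[symmetric] algebra_simps)
    finally show ?thesis .
  qed
  have q: "qf P Phi0 = of_real ((sqrt \<alpha> + sqrt \<delta>)^2)"
  proof -
    have "qf P Phi0 = \<alpha> *\<^sub>R 1 + m *\<^sub>R 1 + m *\<^sub>R 1 + \<delta> *\<^sub>R (1::complex)"
      unfolding Pexp by (simp only: qf_add qf_scale) (simp add: x_def y_def z_def w_def qf_outer cinner_Phi0_tens cinner_tens_Phi0)
    also have "\<dots> = of_real ((sqrt \<alpha> + sqrt \<delta>)^2)"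
      using pos unfolding m_def by (simp add: scaleR_conv_of_real power2_sum)
    finally show ?thesis .
  qed
  have "P \<in> couplings \<rho> \<omega>" unfolding couplings_def is_state_def using ps tr hs h by simp
  moreover have "Re (qf P Phi0) = (sqrt (min ar aw) + sqrt (min br bw))^2"
    unfolding q \<alpha>_def \<delta>_def by simp
  ultimately show ?thesis by blast
qed

lemma val_coupling: "P \<in> couplings \<rho> \<omega> \<Longrightarrow> Re (mtr (P ** C_symm2)) = 8 - 4 * Re (qf P Phi0)"
  unfolding mtr_C couplings_def is_state_def by simp

lemma D2_val:
  assumes c: "complbasis u1 u2" and o: "onb u1 u2" and dr: "diag \<rho> ar br u1 u2" and dw: "diag \<omega> aw bw u1 u2"
    and nn: "ar \<ge> 0" "br \<ge> 0" "aw \<ge> 0" "bw \<ge> 0" and s1: "ar + br = 1" "aw + bw = 1"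
  shows "D2_symm2 \<rho> \<omega> = 8 - 4 * (sqrt (min ar aw) + sqrt (min br bw))^2"
proof -
  let ?F = "(sqrt (min ar aw) + sqrt (min br bw))^2"
  obtain P0 where P0: "P0 \<in> couplings \<rho> \<omega>" "Re (qf P0 Phi0) = ?F"
    using upper[OF o dr dw nn s1] by blast
  have evs: "ev \<rho> u1 = of_real ar" "ev \<rho> u2 = of_real br" "ev \<omega> u1 = of_real aw" "ev \<omega> u2 = of_real bw"
    using ev_diag[OF o dr] ev_diag[OF o dw] by auto
  have lb: "8 - 4 * ?F \<le> Re (mtr (P ** C_symm2))" if "P \<in> couplings \<rho> \<omega>" for P
    using lower[OF c that] val_coupling[OF that] evs by simp
  show ?thesis unfolding D2_symm2_def
  proof (rule cInf_eq_minimum)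
    show "8 - 4 * ?F \<in> (\<lambda>P. Re (mtr (P ** C_symm2))) ` couplings \<rho> \<omega>"
      using P0 val_coupling[OF P0(1)] by (metis image_eqI)
    show "\<And>x. x \<in> (\<lambda>P. Re (mtr (P ** C_symm2))) ` couplings \<rho> \<omega> \<Longrightarrow> 8 - 4 * ?F \<le> x"
      using lb by blast
  qed
qed

definition FF :: "real \<Rightarrow> real \<Rightarrow> real" where
  "FF p q = (sqrt (min p q) + sqrt (min (1-p) (1-q)))^2"

lemma FF_sym: "FF p q = FF q p" unfolding FF_def by (simp add: min.commute)
lemma FF_le: "p \<le> q \<Longrightarrow> FF p q = (sqrt p + sqrt (1-q))^2" unfolding FF_def by simp

lemma case1:
  fixes a1 a2 a3 c1 c2 c3 :: real
  assumes "a1 \<le> a2" "c3 \<le> c2"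
  shows "(a1 + c2)^2 + (a2 + c3)^2 \<le> (a2 + c2)^2 + (a1 + c3)^2"
proof -
  have "(a2 + c2)^2 + (a1 + c3)^2 - ((a1 + c2)^2 + (a2 + c3)^2) = 2 * ((a2 - a1) * (c2 - c3))"
    by (simp add: power2_eq_square algebra_simps)
  moreover have "(a2 - a1) * (c2 - c3) \<ge> 0" using assms by simp
  ultimately show ?thesis by linarith
qed

lemma case2:
  fixes a1 a2 a3 c1 c2 c3 :: real
  assumes "a2 \<le> a1" "c1 \<le> c2" "a1 \<le> a3" "a2 \<ge> 0" "c3 \<ge> 0" "a1^2 + c1^2 = 1" "a2^2 + c2^2 = 1"
  shows "(a2 + c1)^2 + (a2 + c3)^2 \<le> (a2 + c2)^2 + (a1 + c3)^2"
proof -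
  have "(a2 + c2)^2 + (a1 + c3)^2 - ((a2 + c1)^2 + (a2 + c3)^2) = 2 * (a1^2 - a2^2) + 2 * (a2 * (c2 - c1)) + 2 * (c3 * (a1 - a2))"
    using assms(6,7) by algebra
  moreover have "0 \<le> 2 * (a1^2 - a2^2) + 2 * (a2 * (c2 - c1)) + 2 * (c3 * (a1 - a2))"
    using assms by (intro add_nonneg_nonneg mult_nonneg_nonneg) (simp_all add: power_mono)
  ultimately have "0 \<le> (a2 + c2)^2 + (a1 + c3)^2 - ((a2 + c1)^2 + (a2 + c3)^2)" by (simp only:)
  then show ?thesis by (simp only: diff_ge_0_iff_ge)
qed

lemma case3:
  fixes a1 a2 a3 c1 c2 c3 :: real
  assumes "c2 \<le> c3" "a3 \<le> a2" "a1 \<ge> 0" "c2 \<ge> 0" "a2^2 + c2^2 = 1" "a3^2 + c3^2 = 1"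
  shows "(a1 + c2)^2 + (a3 + c2)^2 \<le> (a2 + c2)^2 + (a1 + c3)^2"
proof -
  have "(a2 + c2)^2 + (a1 + c3)^2 - ((a1 + c2)^2 + (a3 + c2)^2) = 2 * (c3^2 - c2^2) + 2 * (c2 * (a2 - a3)) + 2 * (a1 * (c3 - c2))"
    using assms(5,6) by algebra
  moreover have "0 \<le> 2 * (c3^2 - c2^2) + 2 * (c2 * (a2 - a3)) + 2 * (a1 * (c3 - c2))"
    using assms by (intro add_nonneg_nonneg mult_nonneg_nonneg) (simp_all add: power_mono)
  ultimately have "0 \<le> (a2 + c2)^2 + (a1 + c3)^2 - ((a1 + c2)^2 + (a3 + c2)^2)" by (simp only:)
  then show ?thesis by (simp only: diff_ge_0_iff_ge)
qed

lemma tri_ordered: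
  fixes r s w :: real
  assumes "0 \<le> r" "r \<le> 1" "0 \<le> s" "s \<le> 1" "0 \<le> w" "w \<le> 1" "r \<le> w"
  shows "FF r s + FF s w \<le> FF s s + FF r w"
proof -
  have sq: "(sqrt x)^2 + (sqrt (1-x))^2 = 1" if "0 \<le> x" "x \<le> 1" for x :: real
    using that by simp
  have Fss: "FF s s = (sqrt s + sqrt (1-s))^2" by (simp add: FF_le)
  have Frw: "FF r w = (sqrt r + sqrt (1-w))^2" using assms by (simp add: FF_le)
  consider "s \<le> r" | "r \<le> s" "s \<le> w" | "w \<le> s" using assms by linarith
  then show ?thesis
  proof cases
    case 1
    have "FF r s = (sqrt s + sqrt (1-r))^2" using 1 by (simp add: FF_sym[of r s] FF_le)
    moreover have "FF s w = (sqrt s + sqrt (1-w))^2" using 1 assms by (simp add: FF_le)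
    ultimately show ?thesis unfolding Fss Frw
      using case2[of "sqrt s" "sqrt r" "sqrt (1-r)" "sqrt (1-s)" "sqrt w" "sqrt (1-w)"] 1 assms sq by simp
  next
    case 2
    have "FF r s = (sqrt r + sqrt (1-s))^2" using 2 by (simp add: FF_le)
    moreover have "FF s w = (sqrt s + sqrt (1-w))^2" using 2 by (simp add: FF_le)
    ultimately show ?thesis unfolding Fss Frw using case1[of "sqrt r" "sqrt s" "sqrt (1-w)" "sqrt (1-s)"] 2 by simp
  next
    case 3
    have "FF r s = (sqrt r + sqrt (1-s))^2" using 3 assms by (simp add: FF_le)
    moreover have "FF s w = (sqrt w + sqrt (1-s))^2" using 3 by (simp add: FF_sym[of s w] FF_le)
    ultimately show ?thesis unfolding Fss Frw
      using case3[of "sqrt (1-s)" "sqrt (1-w)" "sqrt w" "sqrt s" "sqrt r"] 3 assms sq by simp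
  qed
qed

lemma tri_FF:
  fixes r s w :: real
  assumes "0 \<le> r" "r \<le> 1" "0 \<le> s" "s \<le> 1" "0 \<le> w" "w \<le> 1"
  shows "FF r s + FF s w \<le> FF s s + FF r w"
proof (cases "r \<le> w")
  case True then show ?thesis using tri_ordered assms by blast
next
  case False
  then have "FF w s + FF s r \<le> FF s s + FF w r" using tri_ordered assms by simp
  then show ?thesis by (simp add: FF_sym)
qed

definition vec2 :: "complex \<Rightarrow> complex \<Rightarrow> complex^2" where
  "vec2 a b = (\<chi> i. if i = 1 then a else b)"
lemma vec2_nth[simp]: "vec2 a b $ 1 = a" "vec2 a b $ 2 = b"
  unfolding vec2_def by simp_all

definition bil :: "qmat \<Rightarrow> complex^2 \<Rightarrow> complex^2 \<Rightarrow> complex" where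
  "bil X a b = (\<Sum>l\<in>UNIV. \<Sum>j\<in>UNIV. cnj (a$l) * X$l$j * b$j)"

lemma psd_herm2:
  fixes X :: qmat
  assumes "psd X"
  shows "X$2$1 = cnj (X$1$2)" "Im (X$1$1) = 0" "Im (X$2$2) = 0"
proof -
  have q: "Im (\<Sum>i\<in>UNIV. cnj (v$i) * (X *v v)$i) = 0" for v
    using assms unfolding psd_def by blast
  have e: "(\<Sum>i\<in>UNIV. cnj (vec2 a b $i) * (X *v vec2 a b)$i)
     = cnj a * (X$1$1 * a + X$1$2 * b) + cnj b * (X$2$1 * a + X$2$2 * b)" for a b
    unfolding matrix_vector_mult_def by (simp add: sum_2)
  have 1: "Im (X$1$1) = 0" using q[of "vec2 1 0"] unfolding e by simp
  have 2: "Im (X$2$2) = 0" using q[of "vec2 0 1"] unfolding e by simp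
  have 3: "Im (X$1$2) + Im (X$2$1) = 0" using q[of "vec2 1 1"] 1 2 unfolding e by simp
  have 4: "Re (X$1$2) - Re (X$2$1) = 0" using q[of "vec2 1 \<i>"] 1 2 unfolding e by simp
  show "X$2$1 = cnj (X$1$2)" using 3 4 by (simp add: complex_eq_iff)
  show "Im (X$1$1) = 0" "Im (X$2$2) = 0" by (fact 1, fact 2)
qed

lemma bil_herm:
  assumes "X$2$1 = cnj (X$1$2)" "Im (X$1$1) = 0" "Im (X$2$2) = 0"
  shows "bil X a b = cnj (bil X b a)"
proof -
  have "cnj (X$1$1) = X$1$1" "cnj (X$2$2) = X$2$2" using assms(2,3) by (simp_all add: complex_eq_iff)
  then show ?thesis unfolding bil_def using assms(1) by (simp add: sum_2 algebra_simps)
qed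

lemma expand_basis:
  assumes "complbasis u1 u2"
  shows "X$i$k = bil X u1 u1 * (u1$i * cnj (u1$k)) + bil X u1 u2 * (u1$i * cnj (u2$k))
     + bil X u2 u1 * (u2$i * cnj (u1$k)) + bil X u2 u2 * (u2$i * cnj (u2$k))"
proof -
  let ?c = "\<lambda>i l. u1$i * cnj (u1$l) + u2$i * cnj (u2$l)"
  have "bil X u1 u1 * (u1$i * cnj (u1$k)) + bil X u1 u2 * (u1$i * cnj (u2$k))
     + bil X u2 u1 * (u2$i * cnj (u1$k)) + bil X u2 u2 * (u2$i * cnj (u2$k))
     = (\<Sum>l\<in>UNIV. \<Sum>j\<in>UNIV. X$l$j * ?c i l * ?c j k)"
    unfolding bil_def by (simp add: sum_2 algebra_simps)
  also have "\<dots> = X$i$k"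
    using assms exhaust_2[of i] exhaust_2[of k] unfolding complbasis_def by (auto simp: sum_2)
  finally show ?thesis by simp
qed

lemma ev_bil: "ev X u = bil X u u" unfolding ev_def bil_def by simp

lemma diag_from_bil:
  assumes c: "complbasis u1 u2" and o: "onb u1 u2" and st: "is_state X"
    and z1: "bil X u1 u2 = 0" and z2: "bil X u2 u1 = 0"
  shows "\<exists>a b. diag X a b u1 u2 \<and> a \<ge> 0 \<and> b \<ge> 0 \<and> a + b = 1"
proof -
  have ps: "psd X" and tr: "mtr X = 1" using st unfolding is_state_def by auto
  have pe: "Im (bil X u u) = 0 \<and> Re (bil X u u) \<ge> 0" for u
  proof -
    have "bil X u u = (\<Sum>i\<in>UNIV. cnj (u$i) * (X *v u)$i)"
      unfolding bil_def matrix_vector_mult_def by (simp add: sum_distrib_left mult.assoc)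
    then show ?thesis using ps unfolding psd_def by simp
  qed
  have r: "bil X u u = of_real (Re (bil X u u))" for u using pe[of u] by (simp add: complex_eq_iff)
  have "bil X u1 u1 + bil X u2 u2 = (\<Sum>l\<in>UNIV. \<Sum>j\<in>UNIV. X$l$j * (u1$j * cnj (u1$l) + u2$j * cnj (u2$l)))"
    unfolding bil_def by (simp add: sum_2 algebra_simps)
  also have "\<dots> = mtr X"
    using c unfolding mtr_def complbasis_def by (simp add: sum_2)
  finally have "bil X u1 u1 + bil X u2 u2 = mtr X" .
  then have s: "Re (bil X u1 u1) + Re (bil X u2 u2) = 1" using tr by (metis one_complex.simps(1) plus_complex.simps(1))
  have "diag X (Re (bil X u1 u1)) (Re (bil X u2 u2)) u1 u2"
    unfolding diag_def
  proof (intro allI)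
    fix i k
    show "X$i$k = of_real (Re (bil X u1 u1)) * (u1$i * cnj (u1$k)) + of_real (Re (bil X u2 u2)) * (u2$i * cnj (u2$k))"
      using expand_basis[OF c, of X i k] z1 z2 r[of u1] r[of u2] by simp
  qed
  then show ?thesis using pe s by blast
qed

lemma basis_R:
  fixes R :: qmat
  assumes hR: "R$2$1 = cnj (R$1$2)" "Im (R$1$1) = 0" "Im (R$2$2) = 0" and nz: "R$1$2 \<noteq> 0"
  shows "\<exists>u1 u2. complbasis u1 u2 \<and> onb u1 u2 \<and> (\<forall>X::qmat. X$2$1 = cnj (X$1$2) \<and> Im (X$1$1) = 0 \<and> Im (X$2$2) = 0
            \<and> R ** X = X ** R \<longrightarrow> bil X u1 u2 = 0 \<and> bil X u2 u1 = 0)"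
proof -
  define z where "z = R$1$2"
  define \<delta> where "\<delta> = Re (R$1$1 - R$2$2) / 2"
  define lam where "lam = sqrt (\<delta>^2 + (cmod z)^2)"
  define g where "g = lam - \<delta>"
  define n where "n = sqrt ((cmod z)^2 + g^2)"
  have cz: "cmod z > 0" using nz unfolding z_def by simp
  have "sqrt (\<delta>^2) < lam" unfolding lam_def using cz by (intro real_sqrt_less_mono) simp
  then have "\<bar>\<delta>\<bar> < lam" by (simp only: real_sqrt_abs)
  then have gp: "g > 0" unfolding g_def by linarith
  have np: "n > 0" unfolding n_def using gp by (simp add: add_nonneg_pos)
  have lam2: "lam^2 = \<delta>^2 + (cmod z)^2" unfolding lam_def by simp
  have gid: "g * g + 2 * \<delta> * g = (cmod z)^2"
    using lam2 unfolding g_def by (simp add: power2_eq_square algebra_simps)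
  have n2: "n * n = (cmod z)^2 + g * g" unfolding n_def using gp by (simp add: power2_eq_square)
  define G where "G = complex_of_real g"
  define D where "D = complex_of_real \<delta>"
  define N where "N = complex_of_real n"
  have zz: "z * cnj z = complex_of_real ((cmod z)^2)" by (simp only: complex_norm_square)
  have Gid: "G * G + 2 * D * G = z * cnj z"
    unfolding G_def D_def zz by (simp flip: gid)
  have Nid: "N * N = z * cnj z + G * G" unfolding N_def G_def zz by (simp only: of_real_mult[symmetric] of_real_add[symmetric] n2)
  have Nnz: "N \<noteq> 0" unfolding N_def using np by simp
  have cG: "cnj G = G" and cN: "cnj N = N" and cD: "cnj D = D" unfolding G_def N_def D_def by simp_all
  have Rd: "R$1$1 - R$2$2 = 2 * D"
    using hR(2,3) unfolding D_def \<delta>_def by (simp add: complex_eq_iff)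
  define u1 where "u1 = vec2 (z / N) (G / N)"
  define u2 where "u2 = vec2 (- G / N) (cnj z / N)"
  have NN: "z * cnj z / (N * N) + G * G / (N * N) = 1"
    using Nid Nnz by (simp add: add_divide_distrib[symmetric] flip: Nid)
  have comp: "complbasis u1 u2"
    unfolding complbasis_def u1_def u2_def forall_2
    using NN by (simp add: cG cN algebra_simps)
  have o: "onb u1 u2"
    unfolding onb_def ip_def u1_def u2_def using NN by (simp add: sum_2 cG cN algebra_simps)
  have main: "bil X u1 u2 = 0 \<and> bil X u2 u1 = 0"
    if h: "X$2$1 = cnj (X$1$2)" "Im (X$1$1) = 0" "Im (X$2$2) = 0" and cm: "R ** X = X ** R" for X :: qmat
  proof -
    have e12: "(R ** X)$1$2 = (X ** R)$1$2" and e11: "(R ** X)$1$1 = (X ** R)$1$1" using cm by simp_all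
    have E1: "2 * D * X$1$2 = (X$1$1 - X$2$2) * z"
      using e12 Rd unfolding matrix_matrix_mult_def z_def
      by (simp add: sum_2) (simp add: algebra_simps flip: Rd)
    have E2: "z * cnj (X$1$2) = X$1$2 * cnj z"
      using e11 hR(1) h(1) unfolding matrix_matrix_mult_def z_def by (simp add: sum_2 algebra_simps)
    define T where "T = - G * cnj z * (X$1$1 - X$2$2) + X$1$2 * cnj z * cnj z - G * G * cnj (X$1$2)"
    have bT: "bil X u1 u2 * (N * N) = T"
      unfolding bil_def u1_def u2_def T_def using h(1) Nnz
      by (simp add: sum_2 cG cN field_simps)
    have "z * T = 0" unfolding T_def using E1 E2 Gid by algebra
    then have "T = 0" using nz unfolding z_def by simp
    then have b1: "bil X u1 u2 = 0" using bT Nnz by simp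
    moreover have "bil X u2 u1 = 0" using bil_herm[OF h, of u2 u1] b1 by simp
    ultimately show ?thesis by simp
  qed
  show ?thesis using comp o main by blast
qed

lemma basis_exists:
  assumes s: "is_state \<rho>" "is_state \<sigma>" "is_state \<omega>"
    and c1: "\<rho> ** \<sigma> = \<sigma> ** \<rho>" and c2: "\<sigma> ** \<omega> = \<omega> ** \<sigma>" and c3: "\<rho> ** \<omega> = \<omega> ** \<rho>"
  shows "\<exists>u1 u2. complbasis u1 u2 \<and> onb u1 u2 \<and> bil \<rho> u1 u2 = 0 \<and> bil \<rho> u2 u1 = 0
     \<and> bil \<sigma> u1 u2 = 0 \<and> bil \<sigma> u2 u1 = 0 \<and> bil \<omega> u1 u2 = 0 \<and> bil \<omega> u2 u1 = 0"
proof -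
  have hr: "\<rho>$2$1 = cnj (\<rho>$1$2)" "Im (\<rho>$1$1) = 0" "Im (\<rho>$2$2) = 0"
    using psd_herm2 s(1) unfolding is_state_def by blast+
  have hs: "\<sigma>$2$1 = cnj (\<sigma>$1$2)" "Im (\<sigma>$1$1) = 0" "Im (\<sigma>$2$2) = 0"
    using psd_herm2 s(2) unfolding is_state_def by blast+
  have hw: "\<omega>$2$1 = cnj (\<omega>$1$2)" "Im (\<omega>$1$1) = 0" "Im (\<omega>$2$2) = 0"
    using psd_herm2 s(3) unfolding is_state_def by blast+
  show ?thesis
  proof (cases "\<rho>$1$2 \<noteq> 0")
    case True
    from basis_R[OF hr True] obtain u1 u2 where
      u: "complbasis u1 u2" "onb u1 u2" and m: "\<And>X::qmat. X$2$1 = cnj (X$1$2) \<and> Im (X$1$1) = 0 \<and> Im (X$2$2) = 0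
            \<and> \<rho> ** X = X ** \<rho> \<Longrightarrow> bil X u1 u2 = 0 \<and> bil X u2 u1 = 0" by blast
    show ?thesis using u m[of \<rho>] m[of \<sigma>] m[of \<omega>] hr hs hw c1 c3 by blast
  next
    case F1: False
    show ?thesis
    proof (cases "\<sigma>$1$2 \<noteq> 0")
      case True
      from basis_R[OF hs True] obtain u1 u2 where
        u: "complbasis u1 u2" "onb u1 u2" and m: "\<And>X::qmat. X$2$1 = cnj (X$1$2) \<and> Im (X$1$1) = 0 \<and> Im (X$2$2) = 0
              \<and> \<sigma> ** X = X ** \<sigma> \<Longrightarrow> bil X u1 u2 = 0 \<and> bil X u2 u1 = 0" by blast
      show ?thesis using u m[of \<rho>] m[of \<sigma>] m[of \<omega>] hr hs hw c1[symmetric] c2 by blast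
    next
      case F2: False
      show ?thesis
      proof (cases "\<omega>$1$2 \<noteq> 0")
        case True
        from basis_R[OF hw True] obtain u1 u2 where
          u: "complbasis u1 u2" "onb u1 u2" and m: "\<And>X::qmat. X$2$1 = cnj (X$1$2) \<and> Im (X$1$1) = 0 \<and> Im (X$2$2) = 0
                \<and> \<omega> ** X = X ** \<omega> \<Longrightarrow> bil X u1 u2 = 0 \<and> bil X u2 u1 = 0" by blast
        show ?thesis using u m[of \<rho>] m[of \<sigma>] m[of \<omega>] hr hs hw c3[symmetric] c2[symmetric] by blast
      next
        case F3: False
        define e1 where "e1 = vec2 1 0"
        define e2 where "e2 = vec2 0 1"
        have "complbasis e1 e2" unfolding complbasis_def e1_def e2_def forall_2 by simp
        moreover have "onb e1 e2" unfolding onb_def ip_def e1_def e2_def by (simp add: sum_2)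
        moreover have "bil X e1 e2 = X$1$2" "bil X e2 e1 = X$2$1" for X
          unfolding bil_def e1_def e2_def by (simp_all add: sum_2)
        ultimately have "complbasis e1 e2 \<and> onb e1 e2 \<and> bil \<rho> e1 e2 = 0 \<and> bil \<rho> e2 e1 = 0
     \<and> bil \<sigma> e1 e2 = 0 \<and> bil \<sigma> e2 e1 = 0 \<and> bil \<omega> e1 e2 = 0 \<and> bil \<omega> e2 e1 = 0"
          using F1 F2 F3 hr(1) hs(1) hw(1) by simp
        then show ?thesis by blast
      qed
    qed
  qed
qed

lemma D2_FF:
  assumes c: "complbasis u1 u2" and o: "onb u1 u2" and dr: "diag \<rho> ar br u1 u2" and dw: "diag \<omega> aw bw u1 u2"
    and nn: "ar \<ge> 0" "br \<ge> 0" "aw \<ge> 0" "bw \<ge> 0" and s1: "ar + br = 1" "aw + bw = 1"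
  shows "D2_symm2 \<rho> \<omega> = 8 - 4 * FF ar aw"
proof -
  have "br = 1 - ar" "bw = 1 - aw" using s1 by auto
  then show ?thesis using D2_val[OF assms] unfolding FF_def by simp
qed

theorem proposition3p4:
  fixes \<rho> \<sigma> \<omega> :: qmat
  assumes "is_state \<rho>" and "is_state \<sigma>" and "is_state \<omega>"
    and "\<rho> ** \<sigma> = \<sigma> ** \<rho>" and "\<sigma> ** \<omega> = \<omega> ** \<sigma>" and "\<rho> ** \<omega> = \<omega> ** \<rho>"
  shows "d2_symm2 \<rho> \<sigma> + d2_symm2 \<sigma> \<omega> \<ge> d2_symm2 \<rho> \<omega>"
proof -
  obtain u1 u2 where c: "complbasis u1 u2" and o: "onb u1 u2"
    and b: "bil \<rho> u1 u2 = 0" "bil \<rho> u2 u1 = 0" "bil \<sigma> u1 u2 = 0" "bil \<sigma> u2 u1 = 0"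
       "bil \<omega> u1 u2 = 0" "bil \<omega> u2 u1 = 0"
    using basis_exists[OF assms] by blast
  obtain ar br where r: "diag \<rho> ar br u1 u2" "ar \<ge> 0" "br \<ge> 0" "ar + br = 1"
    using diag_from_bil[OF c o assms(1) b(1,2)] by blast
  obtain as bs where s: "diag \<sigma> as bs u1 u2" "as \<ge> 0" "bs \<ge> 0" "as + bs = 1"
    using diag_from_bil[OF c o assms(2) b(3,4)] by blast
  obtain aw bw where w: "diag \<omega> aw bw u1 u2" "aw \<ge> 0" "bw \<ge> 0" "aw + bw = 1"
    using diag_from_bil[OF c o assms(3) b(5,6)] by blast
  have rs: "D2_symm2 \<rho> \<sigma> = 8 - 4 * FF ar as" using D2_FF[OF c o r(1) s(1) r(2,3) s(2,3) r(4) s(4)] .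
  have sw: "D2_symm2 \<sigma> \<omega> = 8 - 4 * FF as aw" using D2_FF[OF c o s(1) w(1) s(2,3) w(2,3) s(4) w(4)] .
  have ss: "D2_symm2 \<sigma> \<sigma> = 8 - 4 * FF as as" using D2_FF[OF c o s(1) s(1) s(2,3) s(2,3) s(4) s(4)] .
  have rw: "D2_symm2 \<rho> \<omega> = 8 - 4 * FF ar aw" using D2_FF[OF c o r(1) w(1) r(2,3) w(2,3) r(4) w(4)] .
  have "FF ar as + FF as aw \<le> FF as as + FF ar aw"
    by (rule tri_FF) (use r s w in linarith)+
  then show ?thesis unfolding d2_symm2_def rs sw ss rw by (simp add: field_simps)
qed

end
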